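(* Let $d\ge3$, $c\in\mathbb{Z}^+$, and $\phi_{(d,c)}(x)=x^d-cdx^{d-1}+c(d-1)$. Then the forward orbit $\{\phi_{(d,c)}^n(0):n\ge0\}$ of $0$ under $\phi_{(d,c)}$ is infinite.
   Context: $\phi^n$ denotes the $n$-fold iterate. *)

theory Defs
  imports Main
begin

definition phi :: "nat \<Rightarrow> int \<Rightarrow> int \<Rightarrow> int" where
  "phi d c x = x ^ d - c * int d * x ^ (d - 1) + c * (int d - 1)"

end

theory Submission
  imports Defs
begin

lemma phi_alt:
  assumes "d \<ge> 1"
  shows "phi d c x = x^(d-1) * (x - c * int d) + c * (int d - 1)"
proof -
  have "x^d = x^(d-1) * x" proof -
    have "d = Suc (d-1)" using assms by simp
    then show ?thesis by (metis power_Suc2)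
  qed
  then show ?thesis unfolding phi_def by (simp add: algebra_simps)
qed

lemma step:
  fixes c x :: int
  assumes d: "d \<ge> 3" and c: "c > 0" and S: "x \<le> -1 \<or> x \<ge> c * int d + 1"
  shows "(phi d c x \<le> -1 \<or> phi d c x \<ge> c * int d + 1) \<and> \<bar>phi d c x\<bar> > \<bar>x\<bar>"
proof -
  define y where "y = x^(d-1) * (x - c * int d)"
  have ph: "phi d c x = y + c * (int d - 1)" using phi_alt[of d c x] d y_def by simp
  have cd: "c * int d \<ge> 3" using c d using mult_mono[of 1 c 3 "int d"] by simp
  have cd1: "c * (int d - 1) > 0" using c d by simp
  have d1: "d - 1 \<noteq> 0" using d by simp
  show ?thesis
  proof (cases "x \<ge> c * int d + 1")
    case True
    have xp: "x^(d-1) \<ge> x" using True cd d1 by (simp add: self_le_power)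
    have "x - c * int d \<ge> 1" using True by simp
    have "y \<ge> x" proof -
      have "x^(d-1) * 1 \<le> x^(d-1) * (x - c * int d)"
        using True cd \<open>x - c * int d \<ge> 1\<close> by (intro mult_left_mono) auto
      then show ?thesis unfolding y_def using xp by linarith
    qed
    then show ?thesis using ph cd1 True cd by auto
  next
    case False
    then have x: "x \<le> -1" using S by simp
    have "\<bar>x\<bar>^(d-1) \<ge> 1" using x by (simp add: one_le_power)
    hence "\<bar>y\<bar> = \<bar>x\<bar>^(d-1) * (\<bar>x\<bar> + c * int d)" unfolding y_def using x cd
      by (simp add: abs_mult power_abs)
    also have "\<dots> \<ge> \<bar>x\<bar> + c * int d" using \<open>\<bar>x\<bar>^(d-1) \<ge> 1\<close> x cd mult_right_mono[of 1 "\<bar>x\<bar>^(d-1)" "\<bar>x\<bar> + c * int d"] by simp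
    finally have ya: "\<bar>y\<bar> \<ge> \<bar>x\<bar> + c * int d" .
    have "c * (int d - 1) = c * int d - c" by (simp add: algebra_simps)
    moreover have "c * int d - c \<ge> 0" using c d by simp
    ultimately have e: "phi d c x = y + (c * int d - c)" "c * int d - c \<ge> 0" using ph by auto
    show ?thesis
    proof (cases "y \<ge> 0")
      case True
      then have "y \<ge> -x + c * int d" using ya x by simp
      moreover have h: "c * int d \<ge> c * 3" using c d by (intro mult_left_mono) auto
      ultimately have p: "y + (c*int d - c) \<ge> c*int d + 1" "y + (c*int d - c) > -x"
        using e(2) x c cd by linarith+
      then have "\<bar>y + (c*int d - c)\<bar> = y + (c*int d - c)" using cd by (intro abs_of_nonneg) linarith
      then show ?thesis unfolding e(1) using p x by simp
    next
      case False
      then have "y \<le> x - c * int d" using ya x by simp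
      then show ?thesis unfolding e(1) using e(2) x c cd by (simp add: abs_if)
    qed
  qed
qed

theorem lemma5p1:
  fixes d :: nat and c :: int
  assumes "d \<ge> 3" and "c > 0"
  shows "infinite {(phi d c ^^ n) 0 | n. True}"
proof -
  define a where "a n = (phi d c ^^ (n+2)) 0" for n
  have cd: "c * int d \<ge> 3" using assms using mult_mono[of 1 c 3 "int d"] by simp
  define x1 where "x1 = c * (int d - 1)"
  have x1ge: "x1 \<ge> 2" unfolding x1_def using assms mult_mono[of 1 c 2 "int d - 1"] by simp
  have p0: "phi d c 0 = x1" unfolding phi_def x1_def using assms by (simp add: power_0_left)
  have "phi d c x1 = x1^(d-1) * (x1 - c * int d) + x1" using phi_alt[of d c x1] assms x1_def by simp
  also have "x1 - c * int d = - c" unfolding x1_def by (simp add: algebra_simps)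
  also have "x1^(d-1) = x1 * x1^(d-2)" proof -
    have "d - 1 = Suc (d - 2)" using assms by simp
    then show ?thesis by simp
  qed
  finally have p1: "phi d c x1 = x1 * (1 - c * x1^(d-2))" by (simp add: algebra_simps)
  have "x1^(d-2) \<ge> 2" proof -
    have "x1 \<le> x1^(d-2)" using x1ge assms by (intro self_le_power) auto
    then show ?thesis using x1ge by simp
  qed
  hence "c * x1^(d-2) \<ge> 2" using assms mult_mono[of 1 c 2 "x1^(d-2)"] by simp
  hence "1 - c * x1^(d-2) \<le> -1" by simp
  hence "phi d c x1 \<le> - x1" unfolding p1 using x1ge mult_left_mono[of "1 - c * x1^(d-2)" "-1" x1] by simp
  hence a0: "a 0 \<le> -1" unfolding a_def using p0 x1ge by (simp add: numeral_2_eq_2)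
  have aS: "a n \<le> -1 \<or> a n \<ge> c * int d + 1" for n
  proof (induction n)
    case 0 then show ?case using a0 by simp
  next
    case (Suc n)
    have "a (Suc n) = phi d c (a n)" unfolding a_def by simp
    then show ?case using step[OF assms Suc] by simp
  qed
  have inc: "\<bar>a n\<bar> < \<bar>a (Suc n)\<bar>" for n
  proof -
    have "a (Suc n) = phi d c (a n)" unfolding a_def by simp
    then show ?thesis using step[OF assms aS[of n]] by simp
  qed
  have sm: "strict_mono (\<lambda>n. \<bar>a n\<bar>)" using inc by (simp add: strict_mono_Suc_iff)
  have "inj a" proof (rule injI)
    fix m n assume "a m = a n"
    then show "m = n" using strict_mono_eq[OF sm, of m n] by simp
  qed
  hence "infinite (range a)" using finite_imageD[of a UNIV] infinite_UNIV_nat by (auto simp: inj_on_def)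
  moreover have "range a \<subseteq> {(phi d c ^^ n) 0 | n. True}" unfolding a_def by blast
  ultimately show ?thesis using finite_subset by blast
qed

end
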